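(* Let $\mathcal X$ be a countable space with the discrete metric and $\mathcal Y$ a Polish space. If a sequence $\{\mu_n\}_{n\in\mathbb N}$ of probability measures on $\mathcal X\times\mathcal Y$ converges setwise to a probability measure $\mu$ (i.e. $\mu_n(D)\to\mu(D)$ for every Borel $D\subset\mathcal X\times\mathcal Y$), then $\mu_n\to\mu$ in $\wp_I(\mathcal X\times\mathcal Y)$.
   Context: For a Polish space $\mathcal S$, $\wp(\mathcal S)$ denotes the Borel probability measures and $\wp_w(\mathcal S)$ this set with the weak-* topology (weakest topology making $\mu\mapsto\int g\,d\mu$ continuous for all bounded continuous $g$). For $\mu\in\wp(\mathcal X\times\mathcal Y)$, $\mu^{\mathcal X}$ is the marginal and $\mu(\cdot\mid x)$ a regular conditional distribution on $\mathcal Y$ given $x$. Let $\psi(\mu)\in\wp(\mathcal X\times\wp_w(\mathcal Y))$ be $\psi(\mu)(dx,d\zeta)=\delta_{\mu(\cdot\mid x)}(d\zeta)\mu^{\mathcal X}(dx)$. The topology of information on $\wp(\mathcal X\times\mathcal Y)$ is the coarsest topology making $\psi$ continuous into $\wp_w(\mathcal X\times\wp_w(\mathcal Y))$; $\wp_I(\mathcal X\times\mathcal Y)$ denotes $\wp(\mathcal X\times\mathcal Y)$ with it. Thus $\mu_n\to\mu$ in $\wp_I$ iff $\psi(\mu_n)\to\psi(\mu)$ weak-*. *)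

theory Defs
  imports "HOL-Probability.Probability"
begin

definition prob_measures :: "'b::topological_space measure set" where
  "prob_measures = {\<nu>. prob_space \<nu> \<and> sets \<nu> = sets borel}"

definition weak_top :: "'b::topological_space measure topology" where
  "weak_top = topology_generated_by
     {{\<nu> \<in> prob_measures. (\<integral>y. g y \<partial>\<nu>) \<in> U} | g U.
        continuous_on UNIV (g :: 'b \<Rightarrow> real) \<and> bounded (range g) \<and> open U}"

definition borel_of :: "'a topology \<Rightarrow> 'a measure" where
  "borel_of T = sigma (topspace T) {U. openin T U}"

definition info_space :: "('a \<times> 'b::topological_space measure) topology" where
  "info_space = prod_topology (discrete_topology UNIV) weak_top"

definition marginal :: "('a \<times> 'b) measure \<Rightarrow> 'a measure" where
  "marginal \<mu> = distr \<mu> (count_space UNIV) fst"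

definition is_rcd :: "('a \<times> 'b::topological_space) measure \<Rightarrow> ('a \<Rightarrow> 'b measure) \<Rightarrow> bool" where
  "is_rcd \<mu> \<kappa> \<longleftrightarrow> (\<forall>x. \<kappa> x \<in> prob_measures) \<and>
     (\<forall>A B. B \<in> sets borel \<longrightarrow>
        measure \<mu> (A \<times> B) = (\<integral>x. indicator A x * measure (\<kappa> x) B \<partial>marginal \<mu>))"

text \<open>psi(mu)(dx, dzeta) = delta_{kappa x}(dzeta) mu^X(dx), i.e. the push-forward of the
  marginal under x |-> (x, kappa x), as a Borel measure on X x P_w(Y).\<close>
definition psi :: "('a \<times> 'b::topological_space) measure \<Rightarrow> ('a \<Rightarrow> 'b measure)
                   \<Rightarrow> ('a \<times> 'b measure) measure" where
  "psi \<mu> \<kappa> = distr (marginal \<mu>) (borel_of info_space) (\<lambda>x. (x, \<kappa> x))"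

definition weak_conv_on :: "'a topology \<Rightarrow> (nat \<Rightarrow> 'a measure) \<Rightarrow> 'a measure \<Rightarrow> bool" where
  "weak_conv_on T Ps P \<longleftrightarrow>
     (\<forall>g. continuous_map T euclideanreal g \<and> bounded (g ` topspace T) \<longrightarrow>
        (\<lambda>n. \<integral>z. g z \<partial>Ps n) \<longlonglongrightarrow> (\<integral>z. g z \<partial>P))"

end

theory Submission
  imports Defs
begin


lemma limitin_generated:
  assumes "l \<in> \<Union>S" "\<And>s. s \<in> S \<Longrightarrow> l \<in> s \<Longrightarrow> eventually (\<lambda>n. f n \<in> s) F"
  shows "limitin (topology_generated_by S) f l F"
proof -
  have key: "generate_topology_on S V \<Longrightarrow> l \<in> V \<Longrightarrow> eventually (\<lambda>n. f n \<in> V) F" for V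
  proof (induction rule: generate_topology_on.induct)
    case Empty then show ?case by simp
  next
    case (Int a b)
    have "eventually (\<lambda>n. f n \<in> a) F" "eventually (\<lambda>n. f n \<in> b) F"
      using Int.IH Int.prems by auto
    then show ?case by (simp add: eventually_conj_iff)
  next
    case (UN K)
    from UN.prems obtain k where k: "k \<in> K" "l \<in> k" by blast
    have "eventually (\<lambda>n. f n \<in> k) F" using UN.IH[OF k] .
    then show ?case by (rule eventually_mono) (use k in blast)
  next
    case (Basis s) then show ?case using assms(2) by blast
  qed
  show ?thesis unfolding limitin_def
  proof (intro conjI allI impI)
    show "l \<in> topspace (topology_generated_by S)" using assms(1) by simp
  next
    fix U assume "openin (topology_generated_by S) U \<and> l \<in> U"
    then show "eventually (\<lambda>n. f n \<in> U) F"
      using key openin_topology_generated_by_iff by blast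
  qed
qed

lemma topspace_weak_top: "topspace (weak_top :: 'b::topological_space measure topology) = prob_measures"
proof -
  have "prob_measures \<in> {{\<nu> \<in> prob_measures. (\<integral>y. g y \<partial>\<nu>) \<in> U} | g U.
        continuous_on UNIV (g :: 'b \<Rightarrow> real) \<and> bounded (range g) \<and> open U}"
    by (rule CollectI, rule exI[of _ "\<lambda>_. 0"], rule exI[of _ UNIV]) auto
  then have a: "prob_measures \<subseteq> \<Union>{{\<nu> \<in> prob_measures. (\<integral>y. g y \<partial>\<nu>) \<in> U} | g U.
        continuous_on UNIV (g :: 'b \<Rightarrow> real) \<and> bounded (range g) \<and> open U}" by (rule Union_upper)
  have b: "\<Union>{{\<nu> \<in> prob_measures. (\<integral>y. g y \<partial>\<nu>) \<in> U} | g U.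
        continuous_on UNIV (g :: 'b \<Rightarrow> real) \<and> bounded (range g) \<and> open U} \<subseteq> prob_measures" by blast
  show ?thesis unfolding weak_top_def topology_generated_by_topspace using a b by (rule equalityI[rotated])
qed

lemma space_borel_of: "space (borel_of T) = topspace T"
  unfolding borel_of_def by (simp add: space_measure_of_conv)

lemma sets_borel_of: assumes "openin T U" shows "U \<in> sets (borel_of T)"
proof -
  have "{U. openin T U} \<subseteq> Pow (topspace T)" using openin_subset by blast
  then show ?thesis unfolding borel_of_def using assms by (simp add: sets_measure_of sigma_sets.Basic)
qed

lemma cont_meas: "continuous_map T euclideanreal g \<Longrightarrow> g \<in> borel_measurable (borel_of T)"
  apply (rule borel_measurableI)
  apply (simp add: space_borel_of)
  apply (rule sets_borel_of)
  using openin_continuous_map_preimage[of T euclideanreal g] by (auto simp: vimage_def Int_def conj_commute)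

lemma marg_sets: "sets (marginal M) = sets (count_space UNIV)"
  unfolding marginal_def by simp

lemma fst_meas:
  fixes M :: "('a \<times> 'b::topological_space) measure"
  assumes S: "sets M = sets (count_space UNIV \<Otimes>\<^sub>M (borel::'b measure))"
  shows "fst \<in> measurable M (count_space UNIV)"
proof -
  have "fst \<in> measurable (count_space UNIV \<Otimes>\<^sub>M (borel::'b measure)) (count_space (UNIV::'a set))"
    by (rule measurable_fst)
  then show ?thesis unfolding measurable_cong_sets[OF S refl] .
qed

lemma marg_prob: "prob_space M \<Longrightarrow> sets M = sets (count_space UNIV \<Otimes>\<^sub>M (borel::'b::topological_space measure)) \<Longrightarrow> prob_space (marginal (M::('a \<times> 'b) measure))"
  unfolding marginal_def
  by (rule prob_space.prob_space_distr, assumption, erule fst_meas)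

lemma marg_measure:
  fixes M :: "('a \<times> 'b::topological_space) measure"
  assumes S: "sets M = sets (count_space UNIV \<Otimes>\<^sub>M (borel::'b measure))"
  shows "measure (marginal M) A = measure M (A \<times> UNIV)"
proof -
  have sp: "space M = UNIV"
    using sets_eq_imp_space_eq[OF S] by (simp add: space_pair_measure)
  have "measure (marginal M) A = measure M (fst -` A \<inter> space M)"
    unfolding marginal_def by (rule measure_distr[OF fst_meas[OF S]]) simp
  also have "fst -` A \<inter> space M = A \<times> UNIV" using sp by auto
  finally show ?thesis .
qed

lemma psi_integral:
  assumes "continuous_map info_space euclideanreal g" "\<And>x. k x \<in> prob_measures"
  shows "(\<integral>z. g z \<partial>psi M k) = (\<integral>x. g (x, k x) \<partial>marginal M)"
  unfolding psi_def
  apply (rule integral_distr)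
   apply (subst measurable_cong_sets[OF marg_sets refl])
   apply (simp add: space_borel_of info_space_def topspace_weak_top assms(2))
  by (rule cont_meas[OF assms(1)])



lemma tri3:
  fixes a s t b d e :: real
  assumes "\<bar>a - s\<bar> \<le> d" "\<bar>s - t\<bar> < e/3" "\<bar>b - t\<bar> \<le> d" "d < e/3"
  shows "\<bar>a - b\<bar> < e"
  using assms by arith

lemma floor_approx:
  fixes M :: "'b measure" and f :: "'b \<Rightarrow> real"
  assumes P: "prob_space M" and f: "f \<in> borel_measurable M" and C: "\<And>y. \<bar>f y\<bar> \<le> C"
    and k: "k > 0"
  defines "N \<equiv> \<lceil>C * real k\<rceil> + 1"
  shows "\<bar>(\<integral>y. f y \<partial>M) - (\<Sum>j\<in>{-N..N}. real_of_int j / real k *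
            measure M {y \<in> space M. \<lfloor>f y * real k\<rfloor> = j})\<bar> \<le> 1 / real k"
proof -
  interpret prob_space M by fact
  define A where "A j = {y \<in> space M. \<lfloor>f y * real k\<rfloor> = j}" for j
  define fk where "fk y = (\<Sum>j\<in>{-N..N}. real_of_int j / real k * indicator (A j) y)" for y
  have Am: "A j \<in> sets M" for j
  proof -
    have "(\<lambda>y. \<lfloor>f y * real k\<rfloor>) \<in> measurable M (count_space UNIV)"
      using f by measurable
    then show ?thesis unfolding A_def
      using measurable_sets[of "\<lambda>y. \<lfloor>f y * real k\<rfloor>" M "count_space UNIV" "{j}"]
      by (auto simp: vimage_def Int_def conj_commute)
  qed
  have fkeq: "fk y = real_of_int \<lfloor>f y * real k\<rfloor> / real k" if y: "y \<in> space M" for y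
  proof -
    have inN: "\<lfloor>f y * real k\<rfloor> \<in> {-N..N}"
    proof -
      have "\<bar>f y * real k\<bar> \<le> C * real k" using C[of y] k
        by (simp add: abs_mult mult_right_mono)
      then have "f y * real k \<le> C * real k" "- (C * real k) \<le> f y * real k" by auto
      moreover have "C * real k \<le> real_of_int \<lceil>C * real k\<rceil>" by linarith
      ultimately show ?thesis unfolding N_def by (auto; linarith)
    qed
    have "fk y = (\<Sum>j\<in>{-N..N}. if j = \<lfloor>f y * real k\<rfloor> then real_of_int j / real k else 0)"
      unfolding fk_def A_def by (rule sum.cong) (auto simp: indicator_def y)
    also have "\<dots> = real_of_int \<lfloor>f y * real k\<rfloor> / real k" using inN by (simp add: sum.delta')
    finally show ?thesis .
  qed
  have intfk: "integrable M fk" unfolding fk_def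
    by (rule Bochner_Integration.integrable_sum, rule integrable_mult_right, rule integrable_real_indicator)
       (auto simp: Am less_top[symmetric])
  have Ifk: "(\<integral>y. fk y \<partial>M) = (\<Sum>j\<in>{-N..N}. real_of_int j / real k * measure M (A j))"
    unfolding fk_def using Am
    by (subst Bochner_Integration.integral_sum)
       (auto intro!: integrable_mult_right integrable_real_indicator simp: less_top[symmetric])
  have intf: "integrable M f" using f C by (intro integrable_const_bound[where B=C]) auto
  have lo: "fk y \<le> f y" if "y \<in> space M" for y
  proof -
    have "real_of_int \<lfloor>f y * real k\<rfloor> \<le> f y * real k" by simp
    then show ?thesis using fkeq[OF that] k by (simp add: divide_le_eq)
  qed
  have hi: "f y \<le> fk y + 1 / real k" if "y \<in> space M" for y
  proof -
    have "f y * real k \<le> real_of_int \<lfloor>f y * real k\<rfloor> + 1" by linarith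
    then have "f y \<le> (real_of_int \<lfloor>f y * real k\<rfloor> + 1) / real k" using k by (simp add: le_divide_eq)
    then show ?thesis using fkeq[OF that] by (simp add: add_divide_distrib)
  qed
  have "(\<integral>y. fk y \<partial>M) \<le> (\<integral>y. f y \<partial>M)" using intfk intf lo by (intro integral_mono) auto
  moreover have "(\<integral>y. f y \<partial>M) \<le> (\<integral>y. fk y + 1 / real k \<partial>M)"
    using intfk intf hi by (intro integral_mono) auto
  moreover have "(\<integral>y. fk y + 1 / real k \<partial>M) = (\<integral>y. fk y \<partial>M) + 1 / real k"
    using intfk by (simp add: prob_space)
  ultimately show ?thesis using Ifk unfolding A_def by linarith
qed

lemma setwise_integral:
  fixes \<nu>s :: "nat \<Rightarrow> 'b measure" and f :: "'b \<Rightarrow> real"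
  assumes P: "\<And>n. prob_space (\<nu>s n)" "prob_space \<nu>" and S: "\<And>n. sets (\<nu>s n) = sets \<nu>"
    and conv: "\<And>A. A \<in> sets \<nu> \<Longrightarrow> (\<lambda>n. measure (\<nu>s n) A) \<longlonglongrightarrow> measure \<nu> A"
    and f: "f \<in> borel_measurable \<nu>" and C: "\<And>y. \<bar>f y\<bar> \<le> C"
  shows "(\<lambda>n. \<integral>y. f y \<partial>\<nu>s n) \<longlonglongrightarrow> (\<integral>y. f y \<partial>\<nu>)"
proof (rule LIMSEQ_I)
  fix e :: real assume e: "0 < e"
  obtain k :: nat where k: "1 / real k < e / 3" "k > 0"
  proof -
    obtain k :: nat where "3 / e < real k" using reals_Archimedean2 by blast
    moreover have "3 / e > 0" using e by simp
    ultimately have k0: "real k > 0" by linarith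
    then have "k > 0" by simp
    moreover have "3 < e * real k" using \<open>3 / e < real k\<close> e by (simp add: field_simps)
    then have "1 / real k < e / 3" using k0 by (simp add: field_simps)
    ultimately have "k > 0" "1 / real k < e / 3" by auto
    then show ?thesis using that by blast
  qed
  define N where "N = \<lceil>C * real k\<rceil> + 1"
  define A where "A j = {y \<in> space \<nu>. \<lfloor>f y * real k\<rfloor> = j}" for j
  have sp: "space (\<nu>s n) = space \<nu>" for n using S sets_eq_imp_space_eq by blast
  have Am: "A j \<in> sets \<nu>" for j
  proof -
    have "(\<lambda>y. \<lfloor>f y * real k\<rfloor>) \<in> measurable \<nu> (count_space UNIV)"
      using f by measurable
    then show ?thesis unfolding A_def
      using measurable_sets[of "\<lambda>y. \<lfloor>f y * real k\<rfloor>" \<nu> "count_space UNIV" "{j}"]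
      by (auto simp: vimage_def Int_def conj_commute)
  qed
  define Sn where "Sn n = (\<Sum>j\<in>{-N..N}. real_of_int j / real k * measure (\<nu>s n) (A j))" for n
  define S0 where "S0 = (\<Sum>j\<in>{-N..N}. real_of_int j / real k * measure \<nu> (A j))"
  have "Sn \<longlonglongrightarrow> S0" unfolding Sn_def S0_def
    by (intro tendsto_sum tendsto_mult tendsto_const conv Am)
  then obtain n0 where n0: "\<And>n. n \<ge> n0 \<Longrightarrow> norm (Sn n - S0) < e / 3"
    using LIMSEQ_D[of Sn S0 "e/3"] e by auto
  have a0: "\<bar>(\<integral>y. f y \<partial>\<nu>) - S0\<bar> \<le> 1 / real k"
    using floor_approx[OF P(2) f C k(2)] unfolding S0_def A_def N_def by simp
  show "\<exists>no. \<forall>n\<ge>no. norm ((\<integral>y. f y \<partial>\<nu>s n) - (\<integral>y. f y \<partial>\<nu>)) < e"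
  proof (intro exI allI impI)
    fix n assume "n \<ge> n0"
    have fn: "f \<in> borel_measurable (\<nu>s n)" using f measurable_cong_sets[OF S[of n] refl] by blast
    have an: "\<bar>(\<integral>y. f y \<partial>\<nu>s n) - Sn n\<bar> \<le> 1 / real k"
      using floor_approx[OF P(1) fn C k(2)] unfolding Sn_def A_def N_def sp by simp
    have n0': "\<bar>Sn n - S0\<bar> < e / 3" using n0[OF \<open>n \<ge> n0\<close>] by simp
    show "norm ((\<integral>y. f y \<partial>\<nu>s n) - (\<integral>y. f y \<partial>\<nu>)) < e"
      unfolding real_norm_def by (rule tri3[OF an n0' a0 k(1)])
  qed
qed



lemma cnt_integrable:
  fixes Q :: "'a::countable measure" and f :: "'a \<Rightarrow> real"
  assumes "prob_space Q" "sets Q = sets (count_space UNIV)" "\<And>x. \<bar>f x\<bar> \<le> C"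
  shows "integrable Q f"
proof -
  interpret prob_space Q by fact
  have "f \<in> borel_measurable Q" by (subst measurable_cong_sets[OF assms(2) refl]) simp
  then show ?thesis using assms(3) by (intro integrable_const_bound[where B=C]) auto
qed

lemma cnt_split:
  fixes Q :: "'a::countable measure" and f :: "'a \<Rightarrow> real"
  assumes P: "prob_space Q" and S: "sets Q = sets (count_space UNIV)" and B: "\<And>x. \<bar>f x\<bar> \<le> C"
    and F: "finite F"
  shows "\<bar>(\<integral>x. f x \<partial>Q) - (\<Sum>y\<in>F. f y * measure Q {y})\<bar> \<le> C * measure Q (- F)"
proof -
  interpret prob_space Q by fact
  have sp: "space Q = UNIV" using sets_eq_imp_space_eq[OF S] by simp
  have ms: "A \<in> sets Q" for A using S by simp
  have C0: "C \<ge> 0" using B[of undefined] by simp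
  have int1: "integrable Q (\<lambda>x. f y * indicator {y} x)" for y
    by (rule integrable_mult_right, rule integrable_real_indicator) (auto simp: ms less_top[symmetric])
  have int2: "integrable Q (\<lambda>x. f x * indicator (-F) x)"
    by (rule cnt_integrable[OF P S, where C=C]) (auto simp: indicator_def B abs_mult C0)
  have int3: "integrable Q (\<lambda>x. C * indicator (-F) x)"
    by (rule integrable_mult_right, rule integrable_real_indicator) (auto simp: ms less_top[symmetric])
  have eq: "f x = (\<Sum>y\<in>F. f y * indicator {y} x) + f x * indicator (-F) x" for x
  proof (cases "x \<in> F")
    case True
    have "(\<Sum>y\<in>F. f y * indicator {y} x) = (\<Sum>y\<in>F. if y = x then f x else 0)"
      by (rule sum.cong) (auto simp: indicator_def)
    then show ?thesis using True F by (simp add: sum.delta)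
  next
    case False
    have "(\<Sum>y\<in>F. f y * indicator {y} x) = 0"
      by (rule sum.neutral) (use False in \<open>auto simp: indicator_def\<close>)
    then show ?thesis using False by simp
  qed
  have "(\<integral>x. f x \<partial>Q) = (\<integral>x. (\<Sum>y\<in>F. f y * indicator {y} x) + f x * indicator (-F) x \<partial>Q)"
    by (subst eq) simp
  also have "\<dots> = (\<integral>x. (\<Sum>y\<in>F. f y * indicator {y} x) \<partial>Q) + (\<integral>x. f x * indicator (-F) x \<partial>Q)"
    by (rule Bochner_Integration.integral_add, rule Bochner_Integration.integrable_sum, rule int1, rule int2)
  also have "(\<integral>x. (\<Sum>y\<in>F. f y * indicator {y} x) \<partial>Q) = (\<Sum>y\<in>F. f y * measure Q {y})"
    by (subst Bochner_Integration.integral_sum, rule int1) (simp add: sp)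
  finally have e1: "(\<integral>x. f x \<partial>Q) - (\<Sum>y\<in>F. f y * measure Q {y}) = (\<integral>x. f x * indicator (-F) x \<partial>Q)"
    by simp
  have "(\<integral>x. f x * indicator (-F) x \<partial>Q) \<le> (\<integral>x. C * indicator (-F) x \<partial>Q)"
    using int2 int3 B by (intro integral_mono) (auto simp: indicator_def abs_le_iff)
  moreover have "(\<integral>x. - (C * indicator (-F) x) \<partial>Q) \<le> (\<integral>x. f x * indicator (-F) x \<partial>Q)"
    using int2 int3 B by (intro integral_mono) (auto simp: indicator_def abs_le_iff minus_le_iff)
  moreover have "(\<integral>x. C * indicator (-F) x \<partial>Q) = C * measure Q (- F)"
  proof -
    have i: "-F \<inter> space Q = -F" using sp by simp
    show ?thesis
      by (subst integral_mult_right_zero, subst Bochner_Integration.integral_indicator, subst i) (rule refl)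
  qed
  ultimately show ?thesis using e1 Bochner_Integration.integral_minus[of Q "\<lambda>x. C * indicator (-F) x"]
    unfolding abs_le_iff by linarith
qed

lemma tri4:
  fixes a s t b x y cd e :: real
  assumes "\<bar>a - s\<bar> \<le> x" "x \<le> cd" "\<bar>s - t\<bar> < e/4" "\<bar>b - t\<bar> \<le> y" "y \<le> cd" "cd \<le> e/4"
  shows "\<bar>a - b\<bar> < e"
  using assms by arith

lemma discrete_conv:
  fixes Ms :: "nat \<Rightarrow> 'a::countable measure" and hs :: "nat \<Rightarrow> 'a \<Rightarrow> real" and h :: "'a \<Rightarrow> real"
  assumes P: "\<And>n. prob_space (Ms n)" "prob_space M"
   and S: "\<And>n. sets (Ms n) = sets (count_space UNIV)" "sets M = sets (count_space UNIV)"
   and conv: "\<And>A. (\<lambda>n. measure (Ms n) A) \<longlonglongrightarrow> measure M A"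
   and B: "\<And>n x. \<bar>hs n x\<bar> \<le> C" "\<And>x. \<bar>h x\<bar> \<le> C"
   and pt: "\<And>x. measure M {x} > 0 \<Longrightarrow> (\<lambda>n. hs n x) \<longlonglongrightarrow> h x"
  shows "(\<lambda>n. \<integral>x. hs n x \<partial>Ms n) \<longlonglongrightarrow> (\<integral>x. h x \<partial>M)"
proof (rule LIMSEQ_I)
  fix e :: real assume e: "e > 0"
  interpret M: prob_space M by fact
  have C0: "C \<ge> 0" using B(2)[of undefined] by simp
  define d where "d = e / (4 * (C + 1))"
  have d0: "d > 0" using e C0 by (simp add: d_def)
  have Cd: "C * d \<le> e / 4"
  proof -
    have "C * d = (e / 4) * (C / (C + 1))" using C0 by (simp add: d_def field_simps)
    also have "\<dots> \<le> (e / 4) * 1" using C0 e by (intro mult_left_mono) auto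
    finally show ?thesis by simp
  qed
  define A where "A N = - ((from_nat :: nat \<Rightarrow> 'a) ` {..<N})" for N
  have "(\<lambda>N. measure M (A N)) \<longlonglongrightarrow> measure M (\<Inter>i. A i)"
    by (rule M.finite_Lim_measure_decseq) (auto simp: S A_def decseq_def)
  moreover have "(\<Inter>i. A i) = {}"
  proof -
    have "x \<notin> A (Suc (to_nat x))" for x :: 'a unfolding A_def
      by (auto intro!: image_eqI[of _ _ "to_nat x"])
    then show ?thesis by blast
  qed
  ultimately have "(\<lambda>N. measure M (A N)) \<longlonglongrightarrow> 0" by simp
  then have "eventually (\<lambda>N. measure M (A N) < d) sequentially" by (rule order_tendstoD(2)[OF _ d0])
  then obtain N0 where "\<forall>n\<ge>N0. measure M (A n) < d" by (auto simp: eventually_sequentially)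
  then obtain N where N: "measure M (A N) < d" by blast
  define F where "F = (from_nat :: nat \<Rightarrow> 'a) ` {..<N}"
  have F: "finite F" unfolding F_def by simp
  have AF: "A N = - F" unfolding A_def F_def by simp
  define Sn where "Sn n = (\<Sum>y\<in>F. hs n y * measure (Ms n) {y})" for n
  define S0 where "S0 = (\<Sum>y\<in>F. h y * measure M {y})"
  have "Sn \<longlonglongrightarrow> S0" unfolding Sn_def S0_def
  proof (rule tendsto_sum)
    fix y assume "y \<in> F"
    show "(\<lambda>n. hs n y * measure (Ms n) {y}) \<longlonglongrightarrow> h y * measure M {y}"
    proof (cases "measure M {y} > 0")
      case True then show ?thesis by (intro tendsto_mult pt conv)
    next
      case False
      then have z: "measure M {y} = 0" using measure_nonneg[of M "{y}"] by linarith
      have "(\<lambda>n. C * measure (Ms n) {y}) \<longlonglongrightarrow> C * 0"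
        using conv[of "{y}"] unfolding z by (intro tendsto_mult tendsto_const)
      then have "(\<lambda>n. C * measure (Ms n) {y}) \<longlonglongrightarrow> 0" by simp
      then have "(\<lambda>n. hs n y * measure (Ms n) {y}) \<longlonglongrightarrow> 0"
        by (rule Lim_null_comparison[rotated])
           (auto intro!: always_eventually simp: abs_mult intro!: mult_right_mono B)
      then show ?thesis using z by simp
    qed
  qed
  then have ev1: "eventually (\<lambda>n. \<bar>Sn n - S0\<bar> < e / 4) sequentially"
    using e by (auto dest!: tendstoD[of _ _ _ "e/4"] simp: dist_real_def)
  have ev2: "eventually (\<lambda>n. measure (Ms n) (- F) < d) sequentially"
    using order_tendstoD(2)[OF conv[of "-F"]] N AF by simp
  from eventually_conj[OF ev1 ev2] obtain n0 where
    n0: "\<And>n. n \<ge> n0 \<Longrightarrow> \<bar>Sn n - S0\<bar> < e / 4 \<and> measure (Ms n) (- F) < d"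
    by (auto simp: eventually_sequentially)
  have a0: "\<bar>(\<integral>x. h x \<partial>M) - S0\<bar> \<le> C * measure M (- F)"
    unfolding S0_def by (rule cnt_split[OF P(2) S(2) B(2) F])
  have a0': "C * measure M (- F) \<le> C * d" using N AF C0 by (intro mult_left_mono) auto
  show "\<exists>no. \<forall>n\<ge>no. norm ((\<integral>x. hs n x \<partial>Ms n) - (\<integral>x. h x \<partial>M)) < e"
  proof (intro exI allI impI)
    fix n assume n: "n \<ge> n0"
    have an: "\<bar>(\<integral>x. hs n x \<partial>Ms n) - Sn n\<bar> \<le> C * measure (Ms n) (- F)"
      unfolding Sn_def by (rule cnt_split[OF P(1) S(1) B(1) F])
    have an': "C * measure (Ms n) (- F) \<le> C * d" using n0[OF n] C0 by (intro mult_left_mono) auto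
    show "norm ((\<integral>x. hs n x \<partial>Ms n) - (\<integral>x. h x \<partial>M)) < e"
      unfolding real_norm_def by (rule tri4[OF an an' conjunct1[OF n0[OF n]] a0 a0' Cd])
  qed
qed



lemma rcd_single:
  fixes M :: "('a::countable \<times> 'b::topological_space) measure"
  assumes "is_rcd M k" "B \<in> sets borel"
  shows "measure M ({x} \<times> B) = measure (marginal M) {x} * measure (k x) B"
proof -
  have "measure M ({x} \<times> B) = (\<integral>x'. indicator {x} x' * measure (k x') B \<partial>marginal M)"
    using assms unfolding is_rcd_def by blast
  also have "\<dots> = (\<integral>x'. measure (k x) B * indicator {x} x' \<partial>marginal M)"
    by (rule Bochner_Integration.integral_cong) (auto simp: indicator_def)
  also have "\<dots> = measure (k x) B * measure (marginal M) {x}"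
    by (simp add: marginal_def)
  finally show ?thesis by simp
qed

theorem theorem4:
  fixes \<mu>s :: "nat \<Rightarrow> ('a::countable \<times> 'b::polish_space) measure"
    and \<mu> :: "('a \<times> 'b) measure"
    and \<kappa>s :: "nat \<Rightarrow> 'a \<Rightarrow> 'b measure"
    and \<kappa> :: "'a \<Rightarrow> 'b measure"
  assumes "\<And>n. prob_space (\<mu>s n)"
    and "\<And>n. sets (\<mu>s n) = sets (count_space UNIV \<Otimes>\<^sub>M borel)"
    and "prob_space \<mu>"
    and "sets \<mu> = sets (count_space UNIV \<Otimes>\<^sub>M borel)"
    and "\<And>D. D \<in> sets (count_space UNIV \<Otimes>\<^sub>M borel) \<Longrightarrow>
           (\<lambda>n. measure (\<mu>s n) D) \<longlonglongrightarrow> measure \<mu> D"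
    and "\<And>n. is_rcd (\<mu>s n) (\<kappa>s n)"
    and "is_rcd \<mu> \<kappa>"
  shows "weak_conv_on info_space (\<lambda>n. psi (\<mu>s n) (\<kappa>s n)) (psi \<mu> \<kappa>)"
  unfolding weak_conv_on_def
proof (intro allI impI)
  fix g :: "'a \<times> 'b measure \<Rightarrow> real"
  assume g: "continuous_map info_space euclideanreal g \<and> bounded (g ` topspace info_space)"
  have top: "topspace info_space = UNIV \<times> (prob_measures :: 'b measure set)"
    unfolding info_space_def by (simp add: topspace_weak_top)
  obtain C where C: "\<And>z. z \<in> topspace info_space \<Longrightarrow> \<bar>g z\<bar> \<le> C"
    using g unfolding bounded_real by auto
  have kp: "\<kappa> x \<in> prob_measures" "\<kappa>s n x \<in> prob_measures" for n x
    using assms(6,7) unfolding is_rcd_def by auto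
  have margconv: "(\<lambda>n. measure (marginal (\<mu>s n)) A) \<longlonglongrightarrow> measure (marginal \<mu>) A" for A
  proof -
    have "A \<times> UNIV \<in> sets (count_space UNIV \<Otimes>\<^sub>M (borel :: 'b measure))"
      by (rule pair_measureI) auto
    then show ?thesis using assms(5) by (simp add: marg_measure assms(2,4))
  qed
  have kconv: "(\<lambda>n. measure (\<kappa>s n x) B) \<longlonglongrightarrow> measure (\<kappa> x) B"
    if pos: "measure (marginal \<mu>) {x} > 0" and B: "B \<in> sets borel" for x B
  proof -
    have "eventually (\<lambda>n. measure (marginal (\<mu>s n)) {x} > 0) sequentially"
      by (rule order_tendstoD(1)[OF margconv pos])
    then have ev: "eventually (\<lambda>n. measure (\<mu>s n) ({x} \<times> B) / measure (marginal (\<mu>s n)) {x}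
                     = measure (\<kappa>s n x) B) sequentially"
      by eventually_elim (simp add: rcd_single[OF assms(6) B])
    have "{x} \<times> B \<in> sets (count_space UNIV \<Otimes>\<^sub>M (borel :: 'b measure))"
      using B by (intro pair_measureI) auto
    then have "(\<lambda>n. measure (\<mu>s n) ({x} \<times> B) / measure (marginal (\<mu>s n)) {x})
                 \<longlonglongrightarrow> measure \<mu> ({x} \<times> B) / measure (marginal \<mu>) {x}"
      using pos by (intro tendsto_divide assms(5) margconv) auto
    also have "measure \<mu> ({x} \<times> B) / measure (marginal \<mu>) {x} = measure (\<kappa> x) B"
      using pos by (simp add: rcd_single[OF assms(7) B])
    finally show ?thesis using ev by (rule Lim_transform_eventually)
  qed
  have wlim: "limitin weak_top (\<lambda>n. \<kappa>s n x) (\<kappa> x) sequentially"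
    if pos: "measure (marginal \<mu>) {x} > 0" for x
  proof -
    have k1: "\<kappa> x \<in> topspace weak_top" using kp topspace_weak_top by blast
    show ?thesis unfolding weak_top_def
    proof (rule limitin_generated)
      show "\<kappa> x \<in> \<Union> {{\<nu> \<in> prob_measures. (\<integral>y. g y \<partial>\<nu>) \<in> U} | g U.
        continuous_on UNIV (g :: 'b \<Rightarrow> real) \<and> bounded (range g) \<and> open U}"
        using k1 unfolding weak_top_def by simp
    next
      fix s assume s: "s \<in> {{\<nu> \<in> prob_measures. (\<integral>y. g y \<partial>\<nu>) \<in> U} | g U.
        continuous_on UNIV (g :: 'b \<Rightarrow> real) \<and> bounded (range g) \<and> open U}" and ks: "\<kappa> x \<in> s"
      then obtain g' :: "'b \<Rightarrow> real" and U :: "real set" where s_eq: "s = {\<nu> \<in> prob_measures. (\<integral>y. g' y \<partial>\<nu>) \<in> U}"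
        and g': "continuous_on UNIV g'" "bounded (range g')" and U: "open U"
        by blast
      obtain C' where C': "\<And>y. \<bar>g' y\<bar> \<le> C'" using g'(2) unfolding bounded_real by auto
      have pm: "prob_space (\<kappa> x)" "sets (\<kappa> x) = sets borel"
        "\<And>n. prob_space (\<kappa>s n x)" "\<And>n. sets (\<kappa>s n x) = sets borel"
        using kp unfolding prob_measures_def by auto
      have gm: "g' \<in> borel_measurable (\<kappa> x)"
        using measurable_cong_sets[OF pm(2) refl] borel_measurable_continuous_onI[OF g'(1)] by blast
      have ss: "sets (\<kappa>s n x) = sets (\<kappa> x)" for n using pm by simp
      have kc: "A \<in> sets (\<kappa> x) \<Longrightarrow> (\<lambda>n. measure (\<kappa>s n x) A) \<longlonglongrightarrow> measure (\<kappa> x) A" for A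
        using kconv[OF pos, of A] pm(2) by simp
      have "(\<lambda>n. \<integral>y. g' y \<partial>\<kappa>s n x) \<longlonglongrightarrow> (\<integral>y. g' y \<partial>\<kappa> x)"
        by (rule setwise_integral[where C=C', OF pm(3) pm(1) ss kc gm C'])
      moreover have "(\<integral>y. g' y \<partial>\<kappa> x) \<in> U" using ks s_eq by auto
      ultimately have "eventually (\<lambda>n. (\<integral>y. g' y \<partial>\<kappa>s n x) \<in> U) sequentially"
        using U topological_tendstoD by blast
      then show "eventually (\<lambda>n. \<kappa>s n x \<in> s) sequentially"
        unfolding s_eq by eventually_elim (simp add: kp)
    qed
  qed
  have P: "prob_space (marginal \<mu>)" "\<And>n. prob_space (marginal (\<mu>s n))"
    using marg_prob assms(1-4) by auto
  have bnd1: "\<bar>g (x, \<kappa>s n x)\<bar> \<le> C" for n x by (rule C) (simp add: top kp)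
  have bnd2: "\<bar>g (x, \<kappa> x)\<bar> \<le> C" for x by (rule C) (simp add: top kp)
  have pt: "(\<lambda>n. g (x, \<kappa>s n x)) \<longlonglongrightarrow> g (x, \<kappa> x)" if pos: "measure (marginal \<mu>) {x} > 0" for x
  proof -
    have "limitin info_space (\<lambda>n. (x, \<kappa>s n x)) (x, \<kappa> x) sequentially"
      unfolding info_space_def limitin_pairwise using wlim[OF pos] by (simp add: o_def)
    from continuous_map_limit[OF conjunct1[OF g] this]
    show "(\<lambda>n. g (x, \<kappa>s n x)) \<longlonglongrightarrow> g (x, \<kappa> x)" by (simp add: o_def)
  qed
  have "(\<lambda>n. \<integral>x. g (x, \<kappa>s n x) \<partial>marginal (\<mu>s n)) \<longlonglongrightarrow> (\<integral>x. g (x, \<kappa> x) \<partial>marginal \<mu>)"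
    by (rule discrete_conv[where C=C, OF P(2) P(1) marg_sets marg_sets margconv bnd1 bnd2 pt])
  then show "(\<lambda>n. \<integral>z. g z \<partial>psi (\<mu>s n) (\<kappa>s n)) \<longlonglongrightarrow> (\<integral>z. g z \<partial>psi \<mu> \<kappa>)"
    using psi_integral[OF conjunct1[OF g]] kp by simp
qed


end
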